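(* Let $SI$, $UI$, $CI$ be a nonnegative bivariate information decomposition, let $\overline{SI}(S;X_1,X_2):=\sup_{f} SI(f(S);X_1,X_2)$ (supremum over all functions $f$ from the alphabet of $S$ to an arbitrary finite set), and let $\overline{UI}^*(S;X_1\setminus X_2):=I(S;X_1)-\overline{SI}(S;X_1,X_2)$. Suppose that $\overline{UI}^*(S;X_1\setminus X_2)=0$, and let $f^*$ be a function achieving the supremum defining $\overline{SI}(S;X_1,X_2)$. Then $X_1 - f^*(S) - S$ is a Markov chain (i.e. $X_1$ and $S$ are conditionally independent given $f^*(S)$), and $UI(f^*(S);X_1\setminus X_2)=0$.
   Context: All random variables have finite alphabets. A nonnegative bivariate information decomposition consists of nonnegative functions $SI(S;X_1,X_2)$, $UI(S;X_1\setminus X_2)$, $UI(S;X_2\setminus X_1)$, $CI(S;X_1,X_2)$, defined for every joint distribution of $(S,X_1,X_2)$ with arbitrary finite alphabets and depending continuously on it, such that $I(S;X_1X_2)=SI(S;X_1,X_2)+CI(S;X_1,X_2)+UI(S;X_1\setminus X_2)+UI(S;X_2\setminus X_1)$, $I(S;X_1)=SI(S;X_1,X_2)+UI(S;X_1\setminus X_2)$ and $I(S;X_2)=SI(S;X_1,X_2)+UI(S;X_2\setminus X_1)$, where $I$ denotes mutual information. *)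

theory Defs
  imports "HOL-Probability.Probability_Mass_Function"
begin

text \<open>Joint distributions of (S, X1, X2). All finite alphabets are encoded as finite
  subsets of nat; a joint distribution is a pmf on nat \<times> nat \<times> nat with finite support.\<close>

type_synonym dist3 = "(nat \<times> nat \<times> nat) pmf"

definition prv :: "'w pmf \<Rightarrow> ('w \<Rightarrow> 'v) \<Rightarrow> 'v \<Rightarrow> real" where
  "prv p X x = measure_pmf.prob p {w. X w = x}"

definition mutual_info :: "'w pmf \<Rightarrow> ('w \<Rightarrow> 'a) \<Rightarrow> ('w \<Rightarrow> 'b) \<Rightarrow> real" where
  "mutual_info p X Y =
     (\<Sum>xy \<in> (\<lambda>w. (X w, Y w)) ` set_pmf p.
        prv p (\<lambda>w. (X w, Y w)) xy *
        log 2 (prv p (\<lambda>w. (X w, Y w)) xy / (prv p X (fst xy) * prv p Y (snd xy))))"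

definition S_rv :: "nat \<times> nat \<times> nat \<Rightarrow> nat" where "S_rv w = fst w"
definition X1_rv :: "nat \<times> nat \<times> nat \<Rightarrow> nat" where "X1_rv w = fst (snd w)"
definition X2_rv :: "nat \<times> nat \<times> nat \<Rightarrow> nat" where "X2_rv w = snd (snd w)"
definition X12_rv :: "nat \<times> nat \<times> nat \<Rightarrow> nat \<times> nat" where "X12_rv w = snd w"

definition continuous_dist :: "(dist3 \<Rightarrow> real) \<Rightarrow> bool" where
  "continuous_dist F \<longleftrightarrow>
     (\<forall>A q r. finite A \<longrightarrow> set_pmf r \<subseteq> A \<longrightarrow> (\<forall>n. set_pmf (q n) \<subseteq> A) \<longrightarrow>
        (\<forall>w\<in>A. (\<lambda>n. pmf (q n) w) \<longlonglongrightarrow> pmf r w) \<longrightarrow>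
        (\<lambda>n. F (q n)) \<longlonglongrightarrow> F r)"

definition nonneg_PID ::
  "(dist3 \<Rightarrow> real) \<Rightarrow> (dist3 \<Rightarrow> real) \<Rightarrow> (dist3 \<Rightarrow> real) \<Rightarrow> (dist3 \<Rightarrow> real) \<Rightarrow> bool" where
  "nonneg_PID SI UI1 UI2 CI \<longleftrightarrow>
     continuous_dist SI \<and> continuous_dist UI1 \<and> continuous_dist UI2 \<and> continuous_dist CI \<and>
     (\<forall>p. finite (set_pmf p) \<longrightarrow>
        SI p \<ge> 0 \<and> UI1 p \<ge> 0 \<and> UI2 p \<ge> 0 \<and> CI p \<ge> 0 \<and>
        mutual_info p S_rv X12_rv = SI p + CI p + UI1 p + UI2 p \<and>
        mutual_info p S_rv X1_rv = SI p + UI1 p \<and>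
        mutual_info p S_rv X2_rv = SI p + UI2 p)"

definition push_S :: "(nat \<Rightarrow> nat) \<Rightarrow> dist3 \<Rightarrow> dist3" where
  "push_S f p = map_pmf (\<lambda>(s, x1, x2). (f s, x1, x2)) p"

definition SI_bar :: "(dist3 \<Rightarrow> real) \<Rightarrow> dist3 \<Rightarrow> real" where
  "SI_bar SI p = (SUP f. SI (push_S f p))"

definition UI_bar_star :: "(dist3 \<Rightarrow> real) \<Rightarrow> dist3 \<Rightarrow> real" where
  "UI_bar_star SI p = mutual_info p S_rv X1_rv - SI_bar SI p"

definition cond_indep :: "'w pmf \<Rightarrow> ('w \<Rightarrow> 'a) \<Rightarrow> ('w \<Rightarrow> 'b) \<Rightarrow> ('w \<Rightarrow> 'c) \<Rightarrow> bool" where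
  "cond_indep p X Y Z \<longleftrightarrow>
     (\<forall>x y z. prv p (\<lambda>w. (X w, Y w, Z w)) (x, y, z) * prv p Z z =
              prv p (\<lambda>w. (X w, Z w)) (x, z) * prv p (\<lambda>w. (Y w, Z w)) (y, z))"

end

theory Submission
  imports Defs
begin

lemma prv_sum:
  assumes "finite (set_pmf p)"
  shows "prv p X x = (\<Sum>w\<in>{w\<in>set_pmf p. X w = x}. pmf p w)"
proof -
  have "prv p X x = measure p ({w. X w = x} \<inter> set_pmf p)"
    unfolding prv_def by (simp add: measure_Int_set_pmf)
  also have "{w. X w = x} \<inter> set_pmf p = {w\<in>set_pmf p. X w = x}" by auto
  also have "measure p {w\<in>set_pmf p. X w = x} = (\<Sum>w\<in>{w\<in>set_pmf p. X w = x}. pmf p w)"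
    using assms by (intro measure_measure_pmf_finite) auto
  finally show ?thesis .
qed

lemma prv_nonneg: "prv p X x \<ge> 0"
  unfolding prv_def by simp

lemma prv_pos:
  assumes "w \<in> set_pmf p"
  shows "prv p X (X w) > 0"
proof -
  have "pmf p w \<le> prv p X (X w)"
    unfolding prv_def measure_pmf_single[symmetric]
    by (intro measure_pmf.finite_measure_mono) auto
  with pmf_positive[OF assms] show ?thesis by linarith
qed

lemma sum_grouped:
  fixes G :: "'v \<Rightarrow> real"
  assumes "finite (set_pmf p)"
  shows "(\<Sum>y\<in>F ` set_pmf p. prv p F y * G y) = (\<Sum>w\<in>set_pmf p. pmf p w * G (F w))"
proof -
  have "(\<Sum>y\<in>F ` set_pmf p. prv p F y * G y) =
        (\<Sum>y\<in>F ` set_pmf p. \<Sum>w\<in>{w\<in>set_pmf p. F w = y}. pmf p w * G (F w))"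
    by (intro sum.cong refl) (auto simp: prv_sum[OF assms] sum_distrib_right)
  also have "\<dots> = (\<Sum>w\<in>set_pmf p. pmf p w * G (F w))"
    using assms by (intro sum.group) auto
  finally show ?thesis .
qed

lemma MI_sum:
  assumes "finite (set_pmf p)"
  shows "mutual_info p X Y = (\<Sum>w\<in>set_pmf p. pmf p w *
     log 2 (prv p (\<lambda>w. (X w, Y w)) (X w, Y w) / (prv p X (X w) * prv p Y (Y w))))"
  unfolding mutual_info_def
  using sum_grouped[OF assms, of "\<lambda>w. (X w, Y w)"
     "\<lambda>xy. log 2 (prv p (\<lambda>w. (X w, Y w)) xy / (prv p X (fst xy) * prv p Y (snd xy)))"]
  by simp

lemma prv_map: "prv (map_pmf h p) X x = prv p (\<lambda>w. X (h w)) x"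
  unfolding prv_def by (simp add: vimage_def)

lemma MI_map: "mutual_info (map_pmf h p) X Y = mutual_info p (\<lambda>w. X (h w)) (\<lambda>w. Y (h w))"
  unfolding mutual_info_def prv_map by (simp add: image_image)

lemma marg:
  assumes fin: "finite (set_pmf p)"
  shows "prv p Z z = (\<Sum>x\<in>X ` set_pmf p. prv p (\<lambda>w. (Z w, X w)) (z, x))"
proof -
  have "(\<Sum>x\<in>X ` set_pmf p. prv p (\<lambda>w. (Z w, X w)) (z, x)) =
        (\<Sum>x\<in>X ` set_pmf p. \<Sum>w\<in>{w\<in>{w\<in>set_pmf p. Z w = z}. X w = x}. pmf p w)"
    by (intro sum.cong refl) (auto simp: prv_sum[OF fin] intro!: sum.cong)
  also have "\<dots> = (\<Sum>w\<in>{w\<in>set_pmf p. Z w = z}. pmf p w)"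
    using fin by (intro sum.group) auto
  finally show ?thesis by (simp add: prv_sum[OF fin])
qed

lemma sum_prv_1:
  assumes fin: "finite (set_pmf p)"
  shows "(\<Sum>y\<in>F ` set_pmf p. prv p F y) = 1"
  using sum_grouped[OF fin, of F "\<lambda>_. 1"] sum_pmf_eq_1[OF fin, of p] by simp

lemma log_ident:
  fixes a b c d e :: real
  assumes "a > 0" "b > 0" "c > 0" "d > 0" "e > 0"
  shows "log 2 (a / (b * e)) - log 2 (c / (d * e)) = - log 2 (b * c / (a * d))"
  using assms by (simp add: log_divide log_mult)

lemma log_bound:
  fixes t :: real
  assumes "t > 0"
  shows "- log 2 t - (1 - t) / ln 2 \<ge> 0"
    and "- log 2 t - (1 - t) / ln 2 = 0 \<Longrightarrow> t = 1"
proof -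
  have l2: "ln (2::real) > 0" by simp
  have e: "- log 2 t - (1 - t) / ln 2 = (t - 1 - ln t) / ln 2"
    by (simp add: log_def field_simps)
  show "- log 2 t - (1 - t) / ln 2 \<ge> 0"
    unfolding e using ln_le_minus_one[OF assms] l2 by simp
  assume "- log 2 t - (1 - t) / ln 2 = 0"
  then have "t - 1 - ln t = 0" unfolding e using l2 by simp
  then show "t = 1" using ln_eq_minus_one[OF assms] by simp
qed


lemma dpi:
  fixes p :: "'w pmf" and S :: "'w \<Rightarrow> 'a" and X :: "'w \<Rightarrow> 'b" and g :: "'a \<Rightarrow> 'c"
  assumes fin: "finite (set_pmf p)"
  shows "mutual_info p (\<lambda>w. g (S w)) X \<le> mutual_info p S X"
    and "mutual_info p S X \<le> mutual_info p (\<lambda>w. g (S w)) X \<Longrightarrow> cond_indep p X S (\<lambda>w. g (S w))"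
proof -
  define W where "W = set_pmf p"
  define ps where "ps = prv p S"
  define px where "px = prv p X"
  define a where "a = prv p (\<lambda>w. (S w, X w))"
  define pz where "pz = prv p (\<lambda>w. g (S w))"
  define c where "c = prv p (\<lambda>w. (g (S w), X w))"
  define t where "t w = ps (S w) * c (g (S w), X w) / (a (S w, X w) * pz (g (S w)))" for w
  define h where "h sx = ps (fst sx) * c (g (fst sx), snd sx) / pz (g (fst sx))" for sx
  define T where "T = S ` W \<times> X ` W"
  define R where "R = (\<Sum>sx\<in>T - (\<lambda>w. (S w, X w)) ` W. h sx)"
  have finW: "finite W" using fin W_def by simp
  have posa: "a (S w, X w) > 0" if "w \<in> W" for w
    using prv_pos[of w p "\<lambda>w. (S w, X w)"] that unfolding a_def W_def by simp
  have posc: "c (g (S w), X w) > 0" if "w \<in> W" for w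
    using prv_pos[of w p "\<lambda>w. (g (S w), X w)"] that unfolding c_def W_def by simp
  have posps: "ps (S w) > 0" if "w \<in> W" for w
    using prv_pos[of w p S] that unfolding ps_def W_def by simp
  have pospx: "px (X w) > 0" if "w \<in> W" for w
    using prv_pos[of w p X] that unfolding px_def W_def by simp
  have pospz: "pz (g (S w)) > 0" if "w \<in> W" for w
    using prv_pos[of w p "\<lambda>w. g (S w)"] that unfolding pz_def W_def by simp
  have post: "t w > 0" if "w \<in> W" for w
    unfolding t_def using posa posc posps pospz that by simp
  have hnn: "h sx \<ge> 0" for sx
    unfolding h_def ps_def c_def pz_def by (intro divide_nonneg_nonneg mult_nonneg_nonneg prv_nonneg)
  have D: "mutual_info p S X - mutual_info p (\<lambda>w. g (S w)) X = (\<Sum>w\<in>W. pmf p w * (- log 2 (t w)))"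
  proof -
    have "mutual_info p S X - mutual_info p (\<lambda>w. g (S w)) X =
      (\<Sum>w\<in>W. pmf p w * (log 2 (a (S w, X w) / (ps (S w) * px (X w))) -
                         log 2 (c (g (S w), X w) / (pz (g (S w)) * px (X w)))))"
      unfolding MI_sum[OF fin] a_def ps_def px_def c_def pz_def W_def
      by (simp add: sum_subtractf right_diff_distrib)
    also have "\<dots> = (\<Sum>w\<in>W. pmf p w * (- log 2 (t w)))"
      unfolding t_def
      by (intro sum.cong refl arg_cong2[where f="(*)"] log_ident posa posc posps pospx pospz)
    finally show ?thesis .
  qed
  have Et: "(\<Sum>w\<in>W. pmf p w * t w) = 1 - R"
  proof -
    have "(\<Sum>w\<in>W. pmf p w * t w) = (\<Sum>w\<in>W. pmf p w * (h (S w, X w) / a (S w, X w)))"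
      unfolding t_def h_def by (simp add: field_simps)
    also have "\<dots> = (\<Sum>sx\<in>(\<lambda>w. (S w, X w)) ` W. a sx * (h sx / a sx))"
      using sum_grouped[OF fin, of "\<lambda>w. (S w, X w)" "\<lambda>sx. h sx / a sx"]
      unfolding a_def W_def by simp
    also have "\<dots> = (\<Sum>sx\<in>(\<lambda>w. (S w, X w)) ` W. h sx)"
      using posa by (intro sum.cong refl) force
    also have "\<dots> = (\<Sum>sx\<in>T. h sx) - R"
    proof -
      have "(\<lambda>w. (S w, X w)) ` W \<subseteq> T" unfolding T_def by auto
      moreover have "finite T" unfolding T_def using finW by simp
      ultimately show ?thesis unfolding R_def
        by (simp add: sum.subset_diff[of "(\<lambda>w. (S w, X w)) ` W" T h])
    qed
    also have "(\<Sum>sx\<in>T. h sx) = 1"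
    proof -
      have "(\<Sum>sx\<in>T. h sx) = (\<Sum>s\<in>S ` W. \<Sum>x\<in>X ` W. h (s, x))"
        unfolding T_def by (simp add: sum.cartesian_product)
      also have "\<dots> = (\<Sum>s\<in>S ` W. ps s / pz (g s) * (\<Sum>x\<in>X ` W. c (g s, x)))"
        unfolding h_def by (simp add: sum_distrib_left)
      also have "\<dots> = (\<Sum>s\<in>S ` W. ps s)"
      proof (intro sum.cong refl)
        fix s assume "s \<in> S ` W"
        then obtain w where "w \<in> W" "s = S w" by auto
        then have "pz (g s) > 0" using pospz by simp
        moreover have "(\<Sum>x\<in>X ` W. c (g s, x)) = pz (g s)"
          unfolding c_def pz_def W_def using marg[OF fin, of "\<lambda>w. g (S w)" "g s" X] by simp
        ultimately show "ps s / pz (g s) * (\<Sum>x\<in>X ` W. c (g s, x)) = ps s" by simp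
      qed
      also have "\<dots> = 1" unfolding ps_def W_def using sum_prv_1[OF fin] by simp
      finally show ?thesis .
    qed
    finally show ?thesis .
  qed
  have Rnn: "R \<ge> 0" unfolding R_def using hnn by (simp add: sum_nonneg)
  have l2: "ln (2::real) > 0" by simp
  have split: "(\<Sum>w\<in>W. pmf p w * (- log 2 (t w))) =
      (\<Sum>w\<in>W. pmf p w * (- log 2 (t w) - (1 - t w) / ln 2)) + R / ln 2"
  proof -
    have "(\<Sum>w\<in>W. pmf p w * (- log 2 (t w))) =
      (\<Sum>w\<in>W. pmf p w * (- log 2 (t w) - (1 - t w) / ln 2)) +
      (\<Sum>w\<in>W. pmf p w * (1 - t w) / ln 2)"
      by (simp add: sum.distrib[symmetric] algebra_simps)
    also have "(\<Sum>w\<in>W. pmf p w * (1 - t w) / ln 2) = ((\<Sum>w\<in>W. pmf p w) - (\<Sum>w\<in>W. pmf p w * t w)) / ln 2"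
      by (simp add: sum_divide_distrib[symmetric] sum_subtractf right_diff_distrib)
    also have "(\<Sum>w\<in>W. pmf p w) = 1" unfolding W_def using sum_pmf_eq_1[OF fin, of p] by simp
    finally show ?thesis using Et by simp
  qed
  have termnn: "pmf p w * (- log 2 (t w) - (1 - t w) / ln 2) \<ge> 0" if "w \<in> W" for w
    using log_bound(1)[OF post[OF that]] by simp
  have S1nn: "(\<Sum>w\<in>W. pmf p w * (- log 2 (t w) - (1 - t w) / ln 2)) \<ge> 0"
    using termnn by (simp add: sum_nonneg)
  show "mutual_info p (\<lambda>w. g (S w)) X \<le> mutual_info p S X"
    using D split S1nn Rnn l2 by (smt (verit) divide_nonneg_pos)
  assume le: "mutual_info p S X \<le> mutual_info p (\<lambda>w. g (S w)) X"
  have R0: "R = 0" and S10: "(\<Sum>w\<in>W. pmf p w * (- log 2 (t w) - (1 - t w) / ln 2)) = 0"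
  proof -
    have q: "R / ln 2 \<ge> 0" using Rnn l2 by simp
    have "R / ln 2 = 0" "(\<Sum>w\<in>W. pmf p w * (- log 2 (t w) - (1 - t w) / ln 2)) = 0"
      using D split S1nn q le by linarith+
    then show "R = 0" "(\<Sum>w\<in>W. pmf p w * (- log 2 (t w) - (1 - t w) / ln 2)) = 0"
      using l2 by simp_all
  qed
  have t1: "t w = 1" if "w \<in> W" for w
  proof -
    have "pmf p w * (- log 2 (t w) - (1 - t w) / ln 2) = 0"
    proof -
      have "\<forall>w\<in>W. pmf p w * (- log 2 (t w) - (1 - t w) / ln 2) = 0"
        using sum_nonneg_eq_0_iff[OF finW, of "\<lambda>w. pmf p w * (- log 2 (t w) - (1 - t w) / ln 2)"]
          termnn S10 by simp
      then show ?thesis using that by simp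
    qed
    then have "- log 2 (t w) - (1 - t w) / ln 2 = 0"
      using pmf_positive[of w p] that W_def by simp
    then show ?thesis using log_bound(2)[OF post[OF that]] by simp
  qed
  have h0: "h sx = 0" if "sx \<in> T - (\<lambda>w. (S w, X w)) ` W" for sx
  proof -
    have "finite (T - (\<lambda>w. (S w, X w)) ` W)" unfolding T_def using finW by simp
    then have "\<forall>sx\<in>T - (\<lambda>w. (S w, X w)) ` W. h sx = 0"
      using sum_nonneg_eq_0_iff[of "T - (\<lambda>w. (S w, X w)) ` W" h] hnn R0 unfolding R_def by simp
    then show ?thesis using that by simp
  qed
  show "cond_indep p X S (\<lambda>w. g (S w))"
    unfolding cond_indep_def
  proof (intro allI)
    fix x y z
    show "prv p (\<lambda>w. (X w, S w, g (S w))) (x, y, z) * prv p (\<lambda>w. g (S w)) z =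
          prv p (\<lambda>w. (X w, g (S w))) (x, z) * prv p (\<lambda>w. (S w, g (S w))) (y, z)"
    proof (cases "z = g y")
      case False
      have "{w. (X w, S w, g (S w)) = (x, y, z)} = {}" using False by auto
      then have z1: "prv p (\<lambda>w. (X w, S w, g (S w))) (x, y, z) = 0"
        unfolding prv_def by (simp only: measure_empty)
      have "{w. (S w, g (S w)) = (y, z)} = {}" using False by auto
      then have z2: "prv p (\<lambda>w. (S w, g (S w))) (y, z) = 0"
        unfolding prv_def by (simp only: measure_empty)
      show ?thesis by (simp only: z1 z2 mult_zero_left mult_zero_right)
    next
      case True
      have e1: "prv p (\<lambda>w. (X w, S w, g (S w))) (x, y, z) = a (y, x)"
        unfolding a_def prv_def True by (intro arg_cong[where f="measure p"]) auto
      have e2: "prv p (\<lambda>w. (S w, g (S w))) (y, z) = ps y"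
        unfolding ps_def prv_def True by (intro arg_cong[where f="measure p"]) auto
      have e3: "prv p (\<lambda>w. (X w, g (S w))) (x, z) = c (z, x)"
        unfolding c_def prv_def by (intro arg_cong[where f="measure p"]) auto
      have goal: "a (y, x) * pz (g y) = c (g y, x) * ps y"
      proof (cases "(y, x) \<in> (\<lambda>w. (S w, X w)) ` W")
        case True
        then obtain w where w: "w \<in> W" "S w = y" "X w = x" by auto
        have "t w = 1" using t1 w by simp
        then show ?thesis using posa[OF w(1)] pospz[OF w(1)] w unfolding t_def
          by (simp add: field_simps)
      next
        case nin: False
        have a0: "a (y, x) = 0"
        proof -
          have "{w. (S w, X w) = (y, x)} \<inter> set_pmf p = {}" using nin W_def by force
          then show ?thesis unfolding a_def prv_def using measure_Int_set_pmf[of p "{w. (S w, X w) = (y, x)}"]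
            by simp
        qed
        have "c (g y, x) * ps y = 0"
        proof (cases "y \<in> S ` W \<and> x \<in> X ` W")
          case True
          then have "h (y, x) = 0" using h0 nin unfolding T_def by auto
          moreover from True obtain w where "w \<in> W" "S w = y" by auto
          then have "pz (g y) > 0" using pospz by auto
          ultimately show ?thesis unfolding h_def by (simp add: mult.commute)
        next
          case False
          then have "y \<notin> S ` W \<or> x \<notin> X ` W" by blast
          then show ?thesis
          proof
            assume "y \<notin> S ` W"
            then have "{w. S w = y} \<inter> set_pmf p = {}" using W_def by auto
            then have "ps y = 0" unfolding ps_def prv_def using measure_Int_set_pmf[of p "{w. S w = y}"]
              by simp
            then show ?thesis by simp
          next
            assume "x \<notin> X ` W"
            then have "{w. (g (S w), X w) = (g y, x)} \<inter> set_pmf p = {}" using W_def by auto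
            then have "c (g y, x) = 0" unfolding c_def prv_def
              using measure_Int_set_pmf[of p "{w. (g (S w), X w) = (g y, x)}"] by simp
            then show ?thesis by simp
          qed
        qed
        then show ?thesis using a0 by simp
      qed
      show ?thesis unfolding e1 e2 e3 using goal True pz_def by simp
    qed
  qed
qed


theorem lemma4:
  fixes SI UI1 UI2 CI :: "dist3 \<Rightarrow> real" and p :: dist3 and fstar :: "nat \<Rightarrow> nat"
  assumes "nonneg_PID SI UI1 UI2 CI"
    and "finite (set_pmf p)"
    and "UI_bar_star SI p = 0"
    and "SI (push_S fstar p) = SI_bar SI p"
  shows "cond_indep p X1_rv S_rv (\<lambda>w. fstar (S_rv w)) \<and> UI1 (push_S fstar p) = 0"
proof -
  let ?q = "push_S fstar p"
  have finq: "finite (set_pmf ?q)" using assms(2) unfolding push_S_def by simp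
  have pid: "UI1 ?q \<ge> 0" "mutual_info ?q S_rv X1_rv = SI ?q + UI1 ?q"
    using assms(1) finq unfolding nonneg_PID_def by blast+
  have e1: "(\<lambda>w. S_rv ((\<lambda>(s, x1, x2). (fstar s, x1, x2)) w)) = (\<lambda>w. fstar (S_rv w))"
    by (auto simp: S_rv_def split_beta)
  have e2: "(\<lambda>w. X1_rv ((\<lambda>(s, x1, x2). (fstar s, x1, x2)) w)) = X1_rv"
    by (auto simp: X1_rv_def split_beta)
  have mq: "mutual_info ?q S_rv X1_rv = mutual_info p (\<lambda>w. fstar (S_rv w)) X1_rv"
    unfolding push_S_def MI_map e1 e2 ..
  have si: "SI ?q = mutual_info p S_rv X1_rv"
    using assms(3,4) unfolding UI_bar_star_def by simp
  have d1: "mutual_info p (\<lambda>w. fstar (S_rv w)) X1_rv \<le> mutual_info p S_rv X1_rv"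
    by (rule dpi(1)[OF assms(2)])
  have u0: "UI1 ?q = 0" using pid mq si d1 by linarith
  have "mutual_info p S_rv X1_rv \<le> mutual_info p (\<lambda>w. fstar (S_rv w)) X1_rv"
    using pid mq si by linarith
  then have "cond_indep p X1_rv S_rv (\<lambda>w. fstar (S_rv w))"
    by (rule dpi(2)[OF assms(2)])
  with u0 show ?thesis by simp
qed

end
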